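(* Let $\{\mathbb{G}_n,\ n=2,3,\ldots\}$ be a sequence of random graphs as described in the context, with $\lim_{n\to\infty}|V_n|=\infty$, and assume the homogeneity condition: for each $n$, $D_{n,k}$ has the same distribution as $D_{n,1}$ for all $k\in V_n$, and for all distinct $k,\ell\in V_n$ the pair $(D_{n,k},D_{n,\ell})$ has the same joint distribution as $(D_{n,1},D_{n,2})$. Fix $d\in\{0,1,2,\ldots\}$. Then there exists a constant $L(d)\in\mathbb{R}$ with $P_n(d)\to L(d)$ in probability as $n\to\infty$ if and only if $$\lim_{n\to\infty}\mathbb{P}[D_{n,1}=d]=L(d)\quad\text{and}\quad \lim_{n\to\infty}\mathrm{Cov}\big[\mathbf{1}[D_{n,1}=d],\mathbf{1}[D_{n,2}=d]\big]=0.$$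
   Context: All random variables are defined on a common probability space $(\Omega,\mathcal{F},\mathbb{P})$. For each $n=2,3,\ldots$, $\mathbb{G}_n$ is a random (possibly directed, self-loops allowed) graph on the deterministic finite node set $V_n=\{1,\ldots,k_n\}$ with $k_n\ge 2$, determined by $\{0,1\}$-valued edge random variables $\{\chi_n(k,\ell),\ k,\ell\in V_n\}$ ($\chi_n(k,\ell)=1$ iff there is an edge from $k$ to $\ell$). The degree of node $k$ is $D_{n,k}=\sum_{\ell\in V_n}\chi_n(k,\ell)$. For $d=0,1,\ldots$, $N_n(d)=\sum_{k\in V_n}\mathbf{1}[D_{n,k}=d]$ and $P_n(d)=N_n(d)/|V_n|$ is the fraction of nodes with degree $d$. *)

theory Defs
  imports "HOL-Probability.Probability"
begin

definition nodes :: "(nat \<Rightarrow> nat) \<Rightarrow> nat \<Rightarrow> nat set" where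
  "nodes kn n = {1..kn n}"

definition degree :: "(nat \<Rightarrow> nat) \<Rightarrow> (nat \<Rightarrow> nat \<Rightarrow> nat \<Rightarrow> 'a \<Rightarrow> bool) \<Rightarrow> nat \<Rightarrow> nat \<Rightarrow> 'a \<Rightarrow> nat" where
  "degree kn chi n k \<omega> = (\<Sum>l\<in>nodes kn n. if chi n k l \<omega> then 1 else 0)"

definition count_deg :: "(nat \<Rightarrow> nat) \<Rightarrow> (nat \<Rightarrow> nat \<Rightarrow> nat \<Rightarrow> 'a \<Rightarrow> bool) \<Rightarrow> nat \<Rightarrow> nat \<Rightarrow> 'a \<Rightarrow> nat" where
  "count_deg kn chi n d \<omega> = (\<Sum>k\<in>nodes kn n. if degree kn chi n k \<omega> = d then 1 else 0)"

definition frac_deg :: "(nat \<Rightarrow> nat) \<Rightarrow> (nat \<Rightarrow> nat \<Rightarrow> nat \<Rightarrow> 'a \<Rightarrow> bool) \<Rightarrow> nat \<Rightarrow> nat \<Rightarrow> 'a \<Rightarrow> real" where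
  "frac_deg kn chi n d \<omega> = real (count_deg kn chi n d \<omega>) / real (card (nodes kn n))"

definition covariance :: "'a measure \<Rightarrow> ('a \<Rightarrow> real) \<Rightarrow> ('a \<Rightarrow> real) \<Rightarrow> real" where
  "covariance M X Y =
     (\<integral>\<omega>. (X \<omega> - (\<integral>\<omega>'. X \<omega>' \<partial>M)) * (Y \<omega> - (\<integral>\<omega>'. Y \<omega>' \<partial>M)) \<partial>M)"

definition ind_eq :: "('a \<Rightarrow> nat) \<Rightarrow> nat \<Rightarrow> 'a \<Rightarrow> real" where
  "ind_eq X d \<omega> = (if X \<omega> = d then 1 else 0)"

definition conv_in_prob :: "'a measure \<Rightarrow> (nat \<Rightarrow> 'a \<Rightarrow> real) \<Rightarrow> real \<Rightarrow> bool" where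
  "conv_in_prob M X c \<longleftrightarrow>
     (\<forall>\<epsilon>>0. (\<lambda>n. measure M {\<omega> \<in> space M. \<bar>X n \<omega> - c\<bar> > \<epsilon>}) \<longlonglongrightarrow> 0)"

end

theory Submission
  imports Defs
begin

lemma (in prob_space) sq_bounds:
  fixes Y :: "'a \<Rightarrow> real"
  assumes Ym: "Y \<in> borel_measurable M" and YB: "\<And>\<omega>. \<bar>Y \<omega>\<bar> \<le> B" and e: "\<epsilon> > 0"
  shows "\<epsilon>\<^sup>2 * measure M {\<omega> \<in> space M. \<bar>Y \<omega>\<bar> > \<epsilon>} \<le> (\<integral>\<omega>. (Y \<omega>)\<^sup>2 \<partial>M)"
    and "(\<integral>\<omega>. (Y \<omega>)\<^sup>2 \<partial>M) \<le> \<epsilon>\<^sup>2 + B\<^sup>2 * measure M {\<omega> \<in> space M. \<bar>Y \<omega>\<bar> > \<epsilon>}"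
proof -
  let ?A = "{\<omega> \<in> space M. \<bar>Y \<omega>\<bar> > \<epsilon>}"
  have A: "?A \<in> sets M" using Ym by measurable
  have B0: "0 \<le> B" using YB[of undefined] by linarith
  have sqB: "(Y \<omega>)\<^sup>2 \<le> B\<^sup>2" for \<omega>
    using YB[of \<omega>] by (metis abs_ge_zero power2_abs power_mono)
  have intY: "integrable M (\<lambda>\<omega>. (Y \<omega>)\<^sup>2)"
    by (rule integrable_const_bound[where B="B\<^sup>2"]) (use sqB Ym in auto)
  have intA: "integrable M (indicator ?A :: 'a \<Rightarrow> real)"
    using A by (simp add: emeasure_eq_measure)
  have "\<epsilon>\<^sup>2 * measure M ?A = (\<integral>\<omega>. \<epsilon>\<^sup>2 * indicator ?A \<omega> \<partial>M)"
    using A by simp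
  also have "\<dots> \<le> (\<integral>\<omega>. (Y \<omega>)\<^sup>2 \<partial>M)"
  proof (rule integral_mono)
    show "integrable M (\<lambda>\<omega>. \<epsilon>\<^sup>2 * indicator ?A \<omega>)" using intA by simp
    show "integrable M (\<lambda>\<omega>. (Y \<omega>)\<^sup>2)" by (fact intY)
    fix \<omega> show "\<epsilon>\<^sup>2 * indicator ?A \<omega> \<le> (Y \<omega>)\<^sup>2"
    proof (cases "\<omega> \<in> ?A")
      case True
      then have "\<epsilon> < \<bar>Y \<omega>\<bar>" by simp
      then have "\<epsilon>\<^sup>2 \<le> \<bar>Y \<omega>\<bar>\<^sup>2" using e by (intro power_mono) auto
      then show ?thesis using True by simp
    qed simp
  qed
  finally show "\<epsilon>\<^sup>2 * measure M ?A \<le> (\<integral>\<omega>. (Y \<omega>)\<^sup>2 \<partial>M)" .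
  have "(\<integral>\<omega>. (Y \<omega>)\<^sup>2 \<partial>M) \<le> (\<integral>\<omega>. \<epsilon>\<^sup>2 + B\<^sup>2 * indicator ?A \<omega> \<partial>M)"
  proof (rule integral_mono)
    show "integrable M (\<lambda>\<omega>. \<epsilon>\<^sup>2 + B\<^sup>2 * indicator ?A \<omega>)" using intA by simp
    show "integrable M (\<lambda>\<omega>. (Y \<omega>)\<^sup>2)" by (fact intY)
    fix \<omega> assume \<omega>: "\<omega> \<in> space M"
    show "(Y \<omega>)\<^sup>2 \<le> \<epsilon>\<^sup>2 + B\<^sup>2 * indicator ?A \<omega>"
    proof (cases "\<omega> \<in> ?A")
      case True
      then show ?thesis using sqB[of \<omega>] zero_le_power2[of \<epsilon>] by (simp add: add_increasing)
    next
      case False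
      then have "\<bar>Y \<omega>\<bar> \<le> \<epsilon>" using \<omega> by auto
      then have "\<bar>Y \<omega>\<bar>\<^sup>2 \<le> \<epsilon>\<^sup>2" by (intro power_mono) auto
      then show ?thesis using False by simp
    qed
  qed
  also have "\<dots> = \<epsilon>\<^sup>2 + B\<^sup>2 * measure M ?A"
    using intA A by (simp add: prob_space)
  finally show "(\<integral>\<omega>. (Y \<omega>)\<^sup>2 \<partial>M) \<le> \<epsilon>\<^sup>2 + B\<^sup>2 * measure M ?A" .
qed

lemma (in prob_space) conv_iff_L2:
  fixes X :: "nat \<Rightarrow> 'a \<Rightarrow> real"
  assumes ev: "eventually (\<lambda>n. X n \<in> borel_measurable M \<and> (\<forall>\<omega>. \<bar>X n \<omega> - c\<bar> \<le> B)) sequentially"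
  shows "conv_in_prob M X c \<longleftrightarrow> ((\<lambda>n. \<integral>\<omega>. (X n \<omega> - c)\<^sup>2 \<partial>M) \<longlonglongrightarrow> 0)"
proof
  assume H: "conv_in_prob M X c"
  show "(\<lambda>n. \<integral>\<omega>. (X n \<omega> - c)\<^sup>2 \<partial>M) \<longlonglongrightarrow> 0"
  proof (rule order_tendstoI)
    fix a :: real assume "a < 0"
    then show "eventually (\<lambda>n. a < (\<integral>\<omega>. (X n \<omega> - c)\<^sup>2 \<partial>M)) sequentially"
      by (intro always_eventually allI) (smt (verit) integral_nonneg_AE zero_le_power2 AE_I2)
  next
    fix a :: real assume a: "0 < a"
    define \<epsilon> where "\<epsilon> = sqrt (a/2)"
    have e: "\<epsilon> > 0" and e2: "\<epsilon>\<^sup>2 = a/2" using a by (auto simp: \<epsilon>_def)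
    have "(\<lambda>n. measure M {\<omega> \<in> space M. \<bar>X n \<omega> - c\<bar> > \<epsilon>}) \<longlonglongrightarrow> 0"
      using H e unfolding conv_in_prob_def by blast
    then have "(\<lambda>n. B\<^sup>2 * measure M {\<omega> \<in> space M. \<bar>X n \<omega> - c\<bar> > \<epsilon>}) \<longlonglongrightarrow> B\<^sup>2 * 0"
      by (intro tendsto_mult tendsto_const)
    then have "eventually (\<lambda>n. B\<^sup>2 * measure M {\<omega> \<in> space M. \<bar>X n \<omega> - c\<bar> > \<epsilon>} < a/2) sequentially"
      using a by (intro order_tendstoD) auto
    then show "eventually (\<lambda>n. (\<integral>\<omega>. (X n \<omega> - c)\<^sup>2 \<partial>M) < a) sequentially"
      using ev
    proof eventually_elim
      case (elim n)
      have "(\<integral>\<omega>. (X n \<omega> - c)\<^sup>2 \<partial>M) \<le> \<epsilon>\<^sup>2 + B\<^sup>2 * measure M {\<omega> \<in> space M. \<bar>X n \<omega> - c\<bar> > \<epsilon>}"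
        using elim e by (intro sq_bounds(2)) auto
      then show ?case using elim e2 by linarith
    qed
  qed
next
  assume H: "(\<lambda>n. \<integral>\<omega>. (X n \<omega> - c)\<^sup>2 \<partial>M) \<longlonglongrightarrow> 0"
  show "conv_in_prob M X c" unfolding conv_in_prob_def
  proof (intro allI impI)
    fix \<epsilon> :: real assume e: "\<epsilon> > 0"
    have lim: "(\<lambda>n. (\<integral>\<omega>. (X n \<omega> - c)\<^sup>2 \<partial>M) / \<epsilon>\<^sup>2) \<longlonglongrightarrow> 0 / \<epsilon>\<^sup>2"
      by (intro tendsto_divide H tendsto_const) (use e in auto)
    show "(\<lambda>n. measure M {\<omega> \<in> space M. \<bar>X n \<omega> - c\<bar> > \<epsilon>}) \<longlonglongrightarrow> 0"
    proof (rule tendsto_sandwich[OF _ _ tendsto_const lim[simplified]])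
      show "eventually (\<lambda>n. 0 \<le> measure M {\<omega> \<in> space M. \<bar>X n \<omega> - c\<bar> > \<epsilon>}) sequentially"
        by simp
      show "eventually (\<lambda>n. measure M {\<omega> \<in> space M. \<bar>X n \<omega> - c\<bar> > \<epsilon>} \<le> (\<integral>\<omega>. (X n \<omega> - c)\<^sup>2 \<partial>M) / \<epsilon>\<^sup>2) sequentially"
        using ev
      proof eventually_elim
        case (elim n)
        have "\<epsilon>\<^sup>2 * measure M {\<omega> \<in> space M. \<bar>X n \<omega> - c\<bar> > \<epsilon>} \<le> (\<integral>\<omega>. (X n \<omega> - c)\<^sup>2 \<partial>M)"
          using elim e by (intro sq_bounds(1)) auto
        then show ?case using e by (simp add: field_simps)
      qed
    qed
  qed
qed

locale degsetup = prob_space M for M :: "'a measure" +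
  fixes kn :: "nat \<Rightarrow> nat" and chi :: "nat \<Rightarrow> nat \<Rightarrow> nat \<Rightarrow> 'a \<Rightarrow> bool" and d :: nat
  assumes meas: "\<And>n k l. n \<ge> 2 \<Longrightarrow> k \<in> nodes kn n \<Longrightarrow> l \<in> nodes kn n \<Longrightarrow>
                 chi n k l \<in> measurable M (count_space UNIV)"
    and kn_ge: "\<And>n. n \<ge> 2 \<Longrightarrow> kn n \<ge> 2"
    and hom1: "\<And>n k. n \<ge> 2 \<Longrightarrow> k \<in> nodes kn n \<Longrightarrow>
                 distr M (count_space UNIV) (degree kn chi n k)
                 = distr M (count_space UNIV) (degree kn chi n 1)"
    and hom2: "\<And>n k l. n \<ge> 2 \<Longrightarrow> k \<in> nodes kn n \<Longrightarrow> l \<in> nodes kn n \<Longrightarrow> k \<noteq> l \<Longrightarrow>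
                 distr M (count_space UNIV) (\<lambda>\<omega>. (degree kn chi n k \<omega>, degree kn chi n l \<omega>))
                 = distr M (count_space UNIV) (\<lambda>\<omega>. (degree kn chi n 1 \<omega>, degree kn chi n 2 \<omega>))"
begin

lemma nodes12: "n \<ge> 2 \<Longrightarrow> 1 \<in> nodes kn n \<and> 2 \<in> nodes kn n"
  using kn_ge[of n] by (auto simp: nodes_def)

lemma deg_meas: assumes n: "n \<ge> 2" and k: "k \<in> nodes kn n"
  shows "degree kn chi n k \<in> measurable M (count_space UNIV)"
  unfolding degree_def
proof (rule measurable_sum_nat)
  fix l assume l: "l \<in> nodes kn n"
  have [measurable]: "Measurable.pred M (chi n k l)" using meas[OF n k l] by (simp add: pred_def)
  show "(\<lambda>\<omega>. if chi n k l \<omega> then 1 else 0 :: nat) \<in> measurable M (count_space UNIV)" by measurable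
qed

lemma ind_meas: assumes n: "n \<ge> 2" and k: "k \<in> nodes kn n"
  shows "ind_eq (degree kn chi n k) d \<in> borel_measurable M"
proof -
  have [measurable]: "degree kn chi n k \<in> measurable M (count_space UNIV)" by (rule deg_meas[OF n k])
  show ?thesis unfolding ind_eq_def by measurable
qed

lemma ind_int: assumes n: "n \<ge> 2" and k: "k \<in> nodes kn n"
  shows "(\<integral>\<omega>. ind_eq (degree kn chi n k) d \<omega> \<partial>M) = measure M {\<omega> \<in> space M. degree kn chi n 1 \<omega> = d}"
proof -
  have m1: "degree kn chi n 1 \<in> measurable M (count_space UNIV)" using deg_meas n nodes12 by blast
  have mk: "degree kn chi n k \<in> measurable M (count_space UNIV)" using deg_meas n k by blast
  have "(\<integral>\<omega>. ind_eq (degree kn chi n k) d \<omega> \<partial>M) = (\<integral>\<omega>. indicator {\<omega> \<in> space M. degree kn chi n k \<omega> = d} \<omega> \<partial>M)"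
    by (rule Bochner_Integration.integral_cong) (auto simp: ind_eq_def)
  also have "\<dots> = measure M (degree kn chi n k -` {d} \<inter> space M)"
    by (simp add: Int_def vimage_def conj_commute)
  also have "\<dots> = measure (distr M (count_space UNIV) (degree kn chi n k)) {d}"
    using mk by (simp add: measure_distr)
  also have "\<dots> = measure (distr M (count_space UNIV) (degree kn chi n 1)) {d}"
    using hom1[OF n k] by simp
  also have "\<dots> = measure M {\<omega> \<in> space M. degree kn chi n 1 \<omega> = d}"
    using m1 by (simp add: measure_distr Int_def vimage_def conj_commute)
  finally show ?thesis .
qed

lemma pair_meas: assumes n: "n \<ge> 2" and k: "k \<in> nodes kn n" and l: "l \<in> nodes kn n"
  shows "(\<lambda>\<omega>. (degree kn chi n k \<omega>, degree kn chi n l \<omega>)) \<in> measurable M (count_space UNIV)"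
proof -
  have [measurable]: "degree kn chi n k \<in> measurable M (count_space UNIV)" using deg_meas n k by blast
  have [measurable]: "degree kn chi n l \<in> measurable M (count_space UNIV)" using deg_meas n l by blast
  show ?thesis unfolding measurable_count_space_eq2_countable
  proof (intro conjI ballI)
    fix a :: "nat \<times> nat"
    have "(\<lambda>\<omega>. (degree kn chi n k \<omega>, degree kn chi n l \<omega>)) -` {a} \<inter> space M
       = {\<omega> \<in> space M. degree kn chi n k \<omega> = fst a \<and> degree kn chi n l \<omega> = snd a}"
      by (cases a) auto
    also have "\<dots> \<in> sets M" by measurable
    finally show "(\<lambda>\<omega>. (degree kn chi n k \<omega>, degree kn chi n l \<omega>)) -` {a} \<inter> space M \<in> sets M" .
  qed auto
qed

lemma prod_int: assumes n: "n \<ge> 2" and k: "k \<in> nodes kn n" and l: "l \<in> nodes kn n" and kl: "k \<noteq> l"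
  shows "(\<integral>\<omega>. ind_eq (degree kn chi n k) d \<omega> * ind_eq (degree kn chi n l) d \<omega> \<partial>M)
       = (\<integral>\<omega>. ind_eq (degree kn chi n 1) d \<omega> * ind_eq (degree kn chi n 2) d \<omega> \<partial>M)"
proof -
  have gen: "(\<integral>\<omega>. ind_eq (degree kn chi n a) d \<omega> * ind_eq (degree kn chi n b) d \<omega> \<partial>M)
     = measure (distr M (count_space UNIV) (\<lambda>\<omega>. (degree kn chi n a \<omega>, degree kn chi n b \<omega>))) {(d,d)}"
    if a: "a \<in> nodes kn n" and b: "b \<in> nodes kn n" for a b
  proof -
    have "(\<integral>\<omega>. ind_eq (degree kn chi n a) d \<omega> * ind_eq (degree kn chi n b) d \<omega> \<partial>M)
      = (\<integral>\<omega>. indicator ((\<lambda>\<omega>. (degree kn chi n a \<omega>, degree kn chi n b \<omega>)) -` {(d,d)} \<inter> space M) \<omega> \<partial>M)"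
      by (rule Bochner_Integration.integral_cong) (auto simp: ind_eq_def indicator_def)
    also have "\<dots> = measure M ((\<lambda>\<omega>. (degree kn chi n a \<omega>, degree kn chi n b \<omega>)) -` {(d,d)} \<inter> space M)"
      by simp
    also have "\<dots> = measure (distr M (count_space UNIV) (\<lambda>\<omega>. (degree kn chi n a \<omega>, degree kn chi n b \<omega>))) {(d,d)}"
      using pair_meas[OF n a b] by (simp add: measure_distr)
    finally show ?thesis .
  qed
  show ?thesis using gen[OF k l] gen nodes12[OF n] hom2[OF n k l kl] by simp
qed

end

context degsetup begin

lemma ind_int_gen1: assumes n: "n \<ge> 2" and k: "k \<in> nodes kn n"
  shows "integrable M (ind_eq (degree kn chi n k) d)"
  by (rule integrable_const_bound[where B=1]) (auto simp: ind_eq_def ind_meas[OF n k])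

lemma ind_int_gen2: assumes n: "n \<ge> 2" and k: "k \<in> nodes kn n" and l: "l \<in> nodes kn n"
  shows "integrable M (\<lambda>\<omega>. ind_eq (degree kn chi n k) d \<omega> * ind_eq (degree kn chi n l) d \<omega>)"
proof (rule integrable_const_bound[where B=1])
  show "AE x in M. norm (ind_eq (degree kn chi n k) d x * ind_eq (degree kn chi n l) d x) \<le> 1"
    by (auto simp: ind_eq_def)
  show "(\<lambda>\<omega>. ind_eq (degree kn chi n k) d \<omega> * ind_eq (degree kn chi n l) d \<omega>) \<in> borel_measurable M"
    by (intro borel_measurable_times ind_meas[OF n k] ind_meas[OF n l])
qed

lemma cov_eq: assumes n: "n \<ge> 2"
  shows "covariance M (ind_eq (degree kn chi n 1) d) (ind_eq (degree kn chi n 2) d)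
     = (\<integral>\<omega>. ind_eq (degree kn chi n 1) d \<omega> * ind_eq (degree kn chi n 2) d \<omega> \<partial>M)
       - (measure M {\<omega> \<in> space M. degree kn chi n 1 \<omega> = d})\<^sup>2"
proof -
  define I where "I = (\<lambda>k. ind_eq (degree kn chi n k) d)"
  define p where "p = measure M {\<omega> \<in> space M. degree kn chi n 1 \<omega> = d}"
  have n1: "1 \<in> nodes kn n" and n2: "2 \<in> nodes kn n" using nodes12[OF n] by auto
  have i1: "integral\<^sup>L M (I 1) = p" and i2: "integral\<^sup>L M (I 2) = p"
    using ind_int[OF n n1] ind_int[OF n n2] by (auto simp: I_def p_def)
  have int1: "integrable M (I 1)" and int2: "integrable M (I 2)"
    and int12: "integrable M (\<lambda>\<omega>. I 1 \<omega> * I 2 \<omega>)"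
    using ind_int_gen1[OF n n1] ind_int_gen1[OF n n2] ind_int_gen2[OF n n1 n2] unfolding I_def by auto
  have "covariance M (I 1) (I 2) = (\<integral>\<omega>. (I 1 \<omega> * I 2 \<omega> - p * I 1 \<omega>) - (p * I 2 \<omega> - p*p) \<partial>M)"
    unfolding covariance_def i1 i2 by (rule Bochner_Integration.integral_cong) (auto simp: algebra_simps)
  also have "\<dots> = (\<integral>\<omega>. I 1 \<omega> * I 2 \<omega> \<partial>M) - p * p - (p * p - p * p)"
    using int1 int2 int12 i1 i2 by (simp add: Bochner_Integration.integral_diff prob_space)
  finally show ?thesis by (simp add: I_def p_def power2_eq_square)
qed

lemma frac_eq: assumes n: "n \<ge> 2"
  shows "frac_deg kn chi n d \<omega> = (\<Sum>k\<in>nodes kn n. ind_eq (degree kn chi n k) d \<omega>) / real (kn n)"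
  unfolding frac_deg_def count_deg_def ind_eq_def nodes_def
  by (simp add: of_nat_sum) (rule disjI2, rule sum.cong, auto)

lemma frac_meas: assumes n: "n \<ge> 2" shows "frac_deg kn chi n d \<in> borel_measurable M"
proof -
  have "(\<lambda>\<omega>. (\<Sum>k\<in>nodes kn n. ind_eq (degree kn chi n k) d \<omega>) / real (kn n)) \<in> borel_measurable M"
    by (intro borel_measurable_divide borel_measurable_sum borel_measurable_const ind_meas[OF n])
  moreover have "frac_deg kn chi n d = (\<lambda>\<omega>. (\<Sum>k\<in>nodes kn n. ind_eq (degree kn chi n k) d \<omega>) / real (kn n))"
    by (rule ext) (rule frac_eq[OF n])
  ultimately show ?thesis by simp
qed

lemma frac_bound: assumes n: "n \<ge> 2" shows "0 \<le> frac_deg kn chi n d \<omega> \<and> frac_deg kn chi n d \<omega> \<le> 1"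
proof -
  have "(\<Sum>k\<in>nodes kn n. ind_eq (degree kn chi n k) d \<omega>) \<le> (\<Sum>k\<in>nodes kn n. 1)"
    by (intro sum_mono) (auto simp: ind_eq_def)
  moreover have "0 \<le> (\<Sum>k\<in>nodes kn n. ind_eq (degree kn chi n k) d \<omega>)"
    by (intro sum_nonneg) (auto simp: ind_eq_def)
  moreover have "card (nodes kn n) = kn n" by (simp add: nodes_def)
  moreover have "kn n > 0" using kn_ge[OF n] by auto
  ultimately show ?thesis using frac_eq[OF n] by (simp add: divide_le_eq_1)
qed

lemma key: assumes n: "n \<ge> 2"
  shows "(\<integral>\<omega>. (frac_deg kn chi n d \<omega> - c)\<^sup>2 \<partial>M)
     = (measure M {\<omega> \<in> space M. degree kn chi n 1 \<omega> = d} - (measure M {\<omega> \<in> space M. degree kn chi n 1 \<omega> = d})\<^sup>2) / real (kn n)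
       + (real (kn n) - 1) / real (kn n) * covariance M (ind_eq (degree kn chi n 1) d) (ind_eq (degree kn chi n 2) d)
       + (measure M {\<omega> \<in> space M. degree kn chi n 1 \<omega> = d} - c)\<^sup>2"
proof -
  define I where "I = (\<lambda>k. ind_eq (degree kn chi n k) d)"
  define p where "p = measure M {\<omega> \<in> space M. degree kn chi n 1 \<omega> = d}"
  define q where "q = (\<integral>\<omega>. I 1 \<omega> * I 2 \<omega> \<partial>M)"
  define N where "N = nodes kn n"
  define K where "K = real (kn n)"
  have K2: "K \<ge> 2" using kn_ge[OF n] by (simp add: K_def)
  have finN: "finite N" and cardN: "card N = kn n" by (auto simp: N_def nodes_def)
  have iI: "integral\<^sup>L M (I k) = p" if "k \<in> N" for k
    using ind_int[OF n] that by (auto simp: I_def p_def N_def)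
  have intI: "integrable M (I k)" if "k \<in> N" for k
    using ind_int_gen1[OF n] that by (auto simp: I_def N_def)
  have intII: "integrable M (\<lambda>\<omega>. I k \<omega> * I l \<omega>)" if "k \<in> N" "l \<in> N" for k l
    using ind_int_gen2[OF n] that by (auto simp: I_def N_def)
  have iII: "(\<integral>\<omega>. I k \<omega> * I l \<omega> \<partial>M) = (if l = k then p else q)" if "k \<in> N" "l \<in> N" for k l
  proof (cases "l = k")
    case True
    have "(\<integral>\<omega>. I k \<omega> * I l \<omega> \<partial>M) = integral\<^sup>L M (I k)"
      using True by (intro Bochner_Integration.integral_cong) (auto simp: I_def ind_eq_def)
    then show ?thesis using True iI that by simp
  next
    case False
    then show ?thesis using prod_int[OF n, of k l] that by (auto simp: I_def q_def N_def)
  qed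
  have rowsum: "(\<Sum>l\<in>N. (\<integral>\<omega>. I k \<omega> * I l \<omega> \<partial>M)) = p + (K - 1) * q" if k: "k \<in> N" for k
  proof -
    have "(\<Sum>l\<in>N. (\<integral>\<omega>. I k \<omega> * I l \<omega> \<partial>M)) = (\<Sum>l\<in>N. q + (if l = k then p - q else 0))"
      using iII k by (intro sum.cong) auto
    also have "\<dots> = real (card N) * q + (p - q)"
      using finN k by (simp add: sum.distrib)
    finally show ?thesis by (simp add: cardN K_def algebra_simps)
  qed
  have pw: "(frac_deg kn chi n d \<omega> - c)\<^sup>2
     = (\<Sum>k\<in>N. \<Sum>l\<in>N. I k \<omega> * I l \<omega>) / K\<^sup>2 - (2 * c / K) * (\<Sum>k\<in>N. I k \<omega>) + c\<^sup>2" for \<omega>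
  proof -
    have sp: "(\<Sum>k\<in>N. \<Sum>l\<in>N. I k \<omega> * I l \<omega>) = (\<Sum>k\<in>N. I k \<omega>) * (\<Sum>k\<in>N. I k \<omega>)"
      by (simp add: sum_product)
    have fr: "frac_deg kn chi n d \<omega> = (\<Sum>k\<in>N. I k \<omega>) / K"
      using frac_eq[OF n, of \<omega>] by (simp add: I_def N_def K_def)
    show ?thesis unfolding sp fr using K2
      by (simp add: power2_eq_square field_simps)
  qed
  have "(\<integral>\<omega>. (frac_deg kn chi n d \<omega> - c)\<^sup>2 \<partial>M)
      = (\<integral>\<omega>. (\<Sum>k\<in>N. \<Sum>l\<in>N. I k \<omega> * I l \<omega>) / K\<^sup>2 - (2 * c / K) * (\<Sum>k\<in>N. I k \<omega>) + c\<^sup>2 \<partial>M)"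
    by (simp add: pw)
  also have "\<dots> = (\<Sum>k\<in>N. \<Sum>l\<in>N. (\<integral>\<omega>. I k \<omega> * I l \<omega> \<partial>M)) / K\<^sup>2 - (2 * c / K) * (\<Sum>k\<in>N. integral\<^sup>L M (I k)) + c\<^sup>2"
    using intI intII
    by (simp add: Bochner_Integration.integral_diff Bochner_Integration.integral_add
        Bochner_Integration.integral_sum integrable_sum prob_space)
  also have "\<dots> = (K * (p + (K - 1) * q)) / K\<^sup>2 - (2 * c / K) * (K * p) + c\<^sup>2"
    using rowsum iI by (simp add: cardN K_def)
  also have "\<dots> = (p - p\<^sup>2) / K + (K - 1) / K * (q - p\<^sup>2) + (p - c)\<^sup>2"
    using K2 by (simp add: field_simps power2_eq_square)
  finally show ?thesis using cov_eq[OF n] by (simp add: p_def q_def K_def I_def)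
qed

end

theorem proposition1:
  fixes M :: "'a measure"
    and kn :: "nat \<Rightarrow> nat"
    and chi :: "nat \<Rightarrow> nat \<Rightarrow> nat \<Rightarrow> 'a \<Rightarrow> bool"
    and d :: nat and L :: real
  assumes "prob_space M"
    and meas: "\<And>n k l. n \<ge> 2 \<Longrightarrow> k \<in> nodes kn n \<Longrightarrow> l \<in> nodes kn n \<Longrightarrow>
                 chi n k l \<in> measurable M (count_space UNIV)"
    and kn_ge: "\<And>n. n \<ge> 2 \<Longrightarrow> kn n \<ge> 2"
    and kn_inf: "filterlim kn at_top sequentially"
    and hom1: "\<And>n k. n \<ge> 2 \<Longrightarrow> k \<in> nodes kn n \<Longrightarrow>
                 distr M (count_space UNIV) (degree kn chi n k)
                 = distr M (count_space UNIV) (degree kn chi n 1)"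
    and hom2: "\<And>n k l. n \<ge> 2 \<Longrightarrow> k \<in> nodes kn n \<Longrightarrow> l \<in> nodes kn n \<Longrightarrow> k \<noteq> l \<Longrightarrow>
                 distr M (count_space UNIV) (\<lambda>\<omega>. (degree kn chi n k \<omega>, degree kn chi n l \<omega>))
                 = distr M (count_space UNIV) (\<lambda>\<omega>. (degree kn chi n 1 \<omega>, degree kn chi n 2 \<omega>))"
  shows "conv_in_prob M (\<lambda>n. frac_deg kn chi n d) L \<longleftrightarrow>
           ((\<lambda>n. measure M {\<omega> \<in> space M. degree kn chi n 1 \<omega> = d}) \<longlonglongrightarrow> L \<and>
            (\<lambda>n. covariance M (ind_eq (degree kn chi n 1) d) (ind_eq (degree kn chi n 2) d))
              \<longlonglongrightarrow> 0)"
proof -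
  have "degsetup M kn chi"
    using assms unfolding degsetup_def degsetup_axioms_def by auto
  then interpret D: degsetup M kn chi d .
  define p where "p = (\<lambda>n. measure M {\<omega> \<in> space M. degree kn chi n 1 \<omega> = d})"
  define c where "c = (\<lambda>n. covariance M (ind_eq (degree kn chi n 1) d) (ind_eq (degree kn chi n 2) d))"
  define K where "K = (\<lambda>n. real (kn n))"
  define e where "e = (\<lambda>n. \<integral>\<omega>. (frac_deg kn chi n d \<omega> - L)\<^sup>2 \<partial>M)"
  define a where "a = (\<lambda>n. (p n - (p n)\<^sup>2) / K n)"
  define b where "b = (\<lambda>n. (K n - 1) / K n)"
  have ev2: "eventually (\<lambda>n. n \<ge> 2) sequentially" by (rule eventually_ge_at_top)
  have conv: "conv_in_prob M (\<lambda>n. frac_deg kn chi n d) L \<longleftrightarrow> (e \<longlonglongrightarrow> 0)"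
    unfolding e_def
  proof (rule D.conv_iff_L2[where B="1 + \<bar>L\<bar>"])
    show "eventually (\<lambda>n. frac_deg kn chi n d \<in> borel_measurable M \<and>
        (\<forall>\<omega>. \<bar>frac_deg kn chi n d \<omega> - L\<bar> \<le> 1 + \<bar>L\<bar>)) sequentially"
      using ev2
    proof eventually_elim
      case (elim n)
      have "\<bar>frac_deg kn chi n d \<omega> - L\<bar> \<le> 1 + \<bar>L\<bar>" for \<omega>
        using D.frac_bound[OF elim, of \<omega>] by (simp add: abs_le_iff) (smt (verit) abs_ge_self abs_ge_minus_self)
      then show ?case using D.frac_meas[OF elim] by auto
    qed
  qed
  have ekey: "eventually (\<lambda>n. e n = a n + b n * c n + (p n - L)\<^sup>2) sequentially"
    using ev2 by eventually_elim (simp add: D.key e_def a_def b_def c_def p_def K_def)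
  have vnn: "eventually (\<lambda>n. 0 \<le> a n + b n * c n) sequentially"
    using ev2
  proof eventually_elim
    case (elim n)
    have "0 \<le> (\<integral>\<omega>. (frac_deg kn chi n d \<omega> - p n)\<^sup>2 \<partial>M)" by simp
    also have "\<dots> = a n + b n * c n"
      using D.key[OF elim, of "p n"] by (simp add: a_def b_def c_def p_def K_def)
    finally show ?case .
  qed
  have Kinf: "filterlim K at_top sequentially"
    unfolding K_def by (rule filterlim_compose[OF filterlim_real_sequentially kn_inf])
  have iK: "(\<lambda>n. inverse (K n)) \<longlonglongrightarrow> 0" by (rule tendsto_inverse_0_at_top[OF Kinf])
  have Kpos: "eventually (\<lambda>n. K n \<ge> 2) sequentially"
    using ev2 by eventually_elim (use kn_ge in \<open>simp add: K_def\<close>)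
  have p01: "0 \<le> p n \<and> p n \<le> 1" for n by (simp add: p_def)
  have alim: "a \<longlonglongrightarrow> 0"
  proof (rule tendsto_sandwich[OF _ _ tendsto_const iK])
    show "eventually (\<lambda>n. 0 \<le> a n) sequentially" using Kpos
    proof eventually_elim
      case (elim n)
      have "(p n)\<^sup>2 \<le> p n" using p01[of n] by (simp add: power2_eq_square mult_left_le)
      then show ?case using elim by (simp add: a_def)
    qed
    show "eventually (\<lambda>n. a n \<le> inverse (K n)) sequentially" using Kpos
    proof eventually_elim
      case (elim n)
      have "p n - (p n)\<^sup>2 \<le> 1" using p01[of n] by (simp add: power2_eq_square) (smt (verit) mult_nonneg_nonneg)
      then have "(p n - (p n)\<^sup>2) / K n \<le> 1 / K n" using elim by (intro divide_right_mono) auto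
      then show ?case by (simp add: a_def inverse_eq_divide)
    qed
  qed
  have blim: "b \<longlonglongrightarrow> 1"
  proof -
    have "(\<lambda>n. 1 - inverse (K n)) \<longlonglongrightarrow> 1 - 0" by (intro tendsto_diff tendsto_const iK)
    moreover have "eventually (\<lambda>n. 1 - inverse (K n) = b n) sequentially"
      using Kpos by eventually_elim (simp add: b_def field_simps)
    ultimately show ?thesis by (simp add: tendsto_cong)
  qed
  show ?thesis
    unfolding conv p_def[symmetric] c_def[symmetric]
  proof
    assume H: "e \<longlonglongrightarrow> 0"
    have sq: "(\<lambda>n. (p n - L)\<^sup>2) \<longlonglongrightarrow> 0"
    proof (rule tendsto_sandwich[OF _ _ tendsto_const H])
      show "eventually (\<lambda>n. 0 \<le> (p n - L)\<^sup>2) sequentially" by simp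
      show "eventually (\<lambda>n. (p n - L)\<^sup>2 \<le> e n) sequentially"
        using ekey vnn by eventually_elim simp
    qed
    have "(\<lambda>n. sqrt ((p n - L)\<^sup>2)) \<longlonglongrightarrow> sqrt 0" by (intro tendsto_real_sqrt sq)
    then have "(\<lambda>n. \<bar>p n - L\<bar>) \<longlonglongrightarrow> 0" by simp
    then have "(\<lambda>n. p n - L) \<longlonglongrightarrow> 0" by (simp add: tendsto_rabs_zero_iff)
    then have plim: "p \<longlonglongrightarrow> L" by (simp add: LIM_zero_iff)
    have vlim: "(\<lambda>n. e n - (p n - L)\<^sup>2) \<longlonglongrightarrow> 0 - 0" by (intro tendsto_diff H sq)
    have "(\<lambda>n. (e n - (p n - L)\<^sup>2 - a n) / b n) \<longlonglongrightarrow> (0 - 0 - 0) / 1"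
      by (intro tendsto_divide tendsto_diff vlim alim blim) auto
    moreover have "eventually (\<lambda>n. (e n - (p n - L)\<^sup>2 - a n) / b n = c n) sequentially"
      using ekey Kpos by eventually_elim (simp add: b_def field_simps)
    ultimately have "c \<longlonglongrightarrow> 0" by (simp add: tendsto_cong)
    with plim show "p \<longlonglongrightarrow> L \<and> c \<longlonglongrightarrow> 0" by simp
  next
    assume H: "p \<longlonglongrightarrow> L \<and> c \<longlonglongrightarrow> 0"
    have "(\<lambda>n. a n + b n * c n + (p n - L)\<^sup>2) \<longlonglongrightarrow> 0 + 1 * 0 + (L - L)\<^sup>2"
      using H by (intro tendsto_add tendsto_mult tendsto_power tendsto_diff alim blim tendsto_const) auto
    then have "(\<lambda>n. a n + b n * c n + (p n - L)\<^sup>2) \<longlonglongrightarrow> 0" by simp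
    then show "e \<longlonglongrightarrow> 0" using ekey by (simp add: tendsto_cong)
  qed
qed

end
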